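(* Let $n\ge2$, let $\lambda_1,\dots,\lambda_n\in\mathbb{C}^*$ (not necessarily distinct), and let $1\le s\le n$ be such that $\lambda=(\lambda_1,\dots,\lambda_n)$ has only level $s$ resonances. Suppose there exists a strictly increasing sequence of integers $(p_\nu)_{\nu\ge0}$ with $p_0=1$ such that $\sum_{\nu\ge0}p_\nu^{-1}\log\omega_s(p_{\nu+1})^{-1}<\infty$ (i.e. $\lambda$ satisfies the partial Brjuno condition of order $s$), and that there exist $k\in\mathbb{N}$ and $\alpha\ge1$ such that $p_\nu>k$ implies $\tilde\omega(p_\nu-k)\ge\omega_s(p_\nu)^\alpha$. Then $\lambda$ satisfies the reduced Brjuno condition.
   Context: For $k\in\mathbb{N}^n$, $|k|=k_1+\cdots+k_n$ and $\lambda^k=\lambda_1^{k_1}\cdots\lambda_n^{k_n}$. For $m\ge2$: $\omega_s(m)=\min_{2\le|k|\le m}\min_{1\le j\le n}|\underline\lambda^k-\lambda_j|$, where $k$ ranges over $\mathbb{N}^s$ and $\underline\lambda^k=\lambda_1^{k_1}\cdots\lambda_s^{k_s}$; and $\tilde\omega(m)=\min_{1\le j\le n}\min\{|\lambda^k-\lambda_j| : k\in\mathbb{N}^n,\ 2\le|k|\le m,\ \lambda^k\ne\lambda_j\}$. The reduced Brjuno condition: there is a strictly increasing sequence of integers $(q_\nu)_{\nu\ge0}$ with $q_0=1$ and $\sum_{\nu\ge0}q_\nu^{-1}\log\tilde\omega(q_{\nu+1})^{-1}<\infty$. Only level $s$ resonances: writing $\lambda=(\lambda_1,\dots,\lambda_s,\mu_1,\dots,\mu_r)$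 with $r=n-s$, for every $k\in\mathbb{N}^n$ with $|k|\ge 2$: there is $h\in\{1,\dots,s\}$ with $\lambda^k=\lambda_h$ iff $k\in\tilde K_1$, and there is $j\in\{1,\dots,r\}$ with $\lambda^k=\mu_j$ iff $k\in\tilde K_2$, where $\tilde K_1=\{k: |k|\ge2,\ k_1+\cdots+k_s=1,\ \mu_1^{k_{s+1}}\cdots\mu_r^{k_n}=1\}$ and $\tilde K_2=\{k: |k|\ge 2,\ k_1=\cdots=k_s=0,\ \exists j\text{ with }\mu_1^{k_{s+1}}\cdots\mu_r^{k_n}=\mu_j\}$. *)

theory Defs
  imports Complex_Main
begin

text \<open>Eigenvalues are lam 1, ..., lam n (1-based). Multi-indices in N^m are
functions k :: nat => nat vanishing outside {1..m}.\<close>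

definition multi_idx :: "nat \<Rightarrow> (nat \<Rightarrow> nat) set" where
  "multi_idx m = {k. \<forall>i. i \<notin> {1..m} \<longrightarrow> k i = 0}"

definition mlen :: "nat \<Rightarrow> (nat \<Rightarrow> nat) \<Rightarrow> nat" where
  "mlen m k = (\<Sum>i\<in>{1..m}. k i)"

definition mpow :: "nat \<Rightarrow> (nat \<Rightarrow> complex) \<Rightarrow> (nat \<Rightarrow> nat) \<Rightarrow> complex" where
  "mpow m lam k = (\<Prod>i\<in>{1..m}. lam i ^ k i)"

definition omega_s :: "nat \<Rightarrow> nat \<Rightarrow> (nat \<Rightarrow> complex) \<Rightarrow> nat \<Rightarrow> real" where
  "omega_s n s lam m = Min {cmod (mpow s lam k - lam j) | k j.
      k \<in> multi_idx s \<and> 2 \<le> mlen s k \<and> mlen s k \<le> m \<and> j \<in> {1..n}}"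

definition omega_tilde :: "nat \<Rightarrow> (nat \<Rightarrow> complex) \<Rightarrow> nat \<Rightarrow> real" where
  "omega_tilde n lam m = Min {cmod (mpow n lam k - lam j) | k j.
      k \<in> multi_idx n \<and> 2 \<le> mlen n k \<and> mlen n k \<le> m \<and> j \<in> {1..n}
      \<and> mpow n lam k \<noteq> lam j}"

text \<open>Product over the mu-part: mu_1^{k_{s+1}} ... mu_r^{k_n}, with mu_j = lam_{s+j}.\<close>
definition mu_pow :: "nat \<Rightarrow> nat \<Rightarrow> (nat \<Rightarrow> complex) \<Rightarrow> (nat \<Rightarrow> nat) \<Rightarrow> complex" where
  "mu_pow n s lam k = (\<Prod>i\<in>{s+1..n}. lam i ^ k i)"

definition K1 :: "nat \<Rightarrow> nat \<Rightarrow> (nat \<Rightarrow> complex) \<Rightarrow> (nat \<Rightarrow> nat) set" where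
  "K1 n s lam = {k \<in> multi_idx n. 2 \<le> mlen n k \<and> (\<Sum>i\<in>{1..s}. k i) = 1
      \<and> mu_pow n s lam k = 1}"

definition K2 :: "nat \<Rightarrow> nat \<Rightarrow> (nat \<Rightarrow> complex) \<Rightarrow> (nat \<Rightarrow> nat) set" where
  "K2 n s lam = {k \<in> multi_idx n. 2 \<le> mlen n k \<and> (\<forall>i\<in>{1..s}. k i = 0)
      \<and> (\<exists>j\<in>{s+1..n}. mu_pow n s lam k = lam j)}"

definition only_level_s_resonances :: "nat \<Rightarrow> nat \<Rightarrow> (nat \<Rightarrow> complex) \<Rightarrow> bool" where
  "only_level_s_resonances n s lam \<longleftrightarrow>
     (\<forall>k \<in> multi_idx n. 2 \<le> mlen n k \<longrightarrow>
        ((\<exists>h\<in>{1..s}. mpow n lam k = lam h) \<longleftrightarrow> k \<in> K1 n s lam) \<and>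
        ((\<exists>j\<in>{s+1..n}. mpow n lam k = lam j) \<longleftrightarrow> k \<in> K2 n s lam))"

definition partial_brjuno :: "nat \<Rightarrow> nat \<Rightarrow> (nat \<Rightarrow> complex) \<Rightarrow> (nat \<Rightarrow> nat) \<Rightarrow> bool" where
  "partial_brjuno n s lam p \<longleftrightarrow> strict_mono p \<and> p 0 = 1 \<and>
     summable (\<lambda>\<nu>. ln (1 / omega_s n s lam (p (Suc \<nu>))) / real (p \<nu>))"

definition reduced_brjuno :: "nat \<Rightarrow> (nat \<Rightarrow> complex) \<Rightarrow> bool" where
  "reduced_brjuno n lam \<longleftrightarrow> (\<exists>q :: nat \<Rightarrow> nat. strict_mono q \<and> q 0 = 1 \<and>
     summable (\<lambda>\<nu>. ln (1 / omega_tilde n lam (q (Suc \<nu>))) / real (q \<nu>)))"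

end

theory Submission
  imports Defs "HOL-Library.FuncSet"
begin

lemma fin_idx: "finite {k \<in> multi_idx m. mlen m k \<le> b}"
proof -
  have "{k \<in> multi_idx m. mlen m k \<le> b} \<subseteq>
     (\<lambda>f i. if i \<in> {1..m} then f i else 0) ` (PiE {1..m} (\<lambda>_. {..b}))"
  proof
    fix k assume k: "k \<in> {k \<in> multi_idx m. mlen m k \<le> b}"
    have "restrict k {1..m} \<in> PiE {1..m} (\<lambda>_. {..b})"
    proof -
      have "\<And>i. i \<in> {1..m} \<Longrightarrow> k i \<le> b"
      proof -
        fix i assume "i \<in> {1..m}"
        then have "k i \<le> mlen m k" unfolding mlen_def by (intro member_le_sum) auto
        then show "k i \<le> b" using k by auto
      qed
      then show ?thesis by (simp add: restrict_PiE_iff)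
    qed
    moreover have "k = (\<lambda>i. if i \<in> {1..m} then restrict k {1..m} i else 0)"
      using k by (auto simp: multi_idx_def)
    ultimately show "k \<in> (\<lambda>f i. if i \<in> {1..m} then f i else 0) ` (PiE {1..m} (\<lambda>_. {..b}))"
      by blast
  qed
  moreover have "finite (PiE {1..m} (\<lambda>_. {..b::nat}))" by (intro finite_PiE) auto
  ultimately show ?thesis by (meson finite_imageI finite_subset)
qed

lemma fin_os: "finite {cmod (mpow s lam k - lam j) | k j.
      k \<in> multi_idx s \<and> 2 \<le> mlen s k \<and> mlen s k \<le> m \<and> j \<in> {1..n}}"
proof -
  have "{cmod (mpow s lam k - lam j) | k j.
      k \<in> multi_idx s \<and> 2 \<le> mlen s k \<and> mlen s k \<le> m \<and> j \<in> {1..n}} \<subseteq>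
     (\<lambda>(k,j). cmod (mpow s lam k - lam j)) ` ({k \<in> multi_idx s. mlen s k \<le> m} \<times> {1..n})"
    by auto
  moreover have "finite ({k \<in> multi_idx s. mlen s k \<le> m} \<times> {1..n})"
    using fin_idx by auto
  ultimately show ?thesis by (meson finite_imageI finite_subset)
qed

lemma fin_ot: "finite {cmod (mpow n lam k - lam j) | k j.
      k \<in> multi_idx n \<and> 2 \<le> mlen n k \<and> mlen n k \<le> m \<and> j \<in> {1..n}
      \<and> mpow n lam k \<noteq> lam j}"
proof -
  have "{cmod (mpow n lam k - lam j) | k j.
      k \<in> multi_idx n \<and> 2 \<le> mlen n k \<and> mlen n k \<le> m \<and> j \<in> {1..n}
      \<and> mpow n lam k \<noteq> lam j} \<subseteq>
     (\<lambda>(k,j). cmod (mpow n lam k - lam j)) ` ({k \<in> multi_idx n. mlen n k \<le> m} \<times> {1..n})"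
    by auto
  moreover have "finite ({k \<in> multi_idx n. mlen n k \<le> m} \<times> {1..n})"
    using fin_idx by auto
  ultimately show ?thesis by (meson finite_imageI finite_subset)
qed

lemma nores:
  assumes "1 \<le> s" "s \<le> n" "only_level_s_resonances n s lam"
    and "k \<in> multi_idx s" "2 \<le> mlen s k" "j \<in> {1..n}"
  shows "mpow n lam k \<noteq> lam j" "k \<in> multi_idx n" "mlen n k = mlen s k"
    "mpow n lam k = mpow s lam k"
proof -
  have z: "\<And>i. i \<in> {s+1..n} \<Longrightarrow> k i = 0" using assms(4) by (auto simp: multi_idx_def)
  have sp: "{1..n} = {1..s} \<union> {s+1..n}" using assms(1,2) by auto
  show kn: "k \<in> multi_idx n" using assms(4) assms(2) by (auto simp: multi_idx_def)
  show ml: "mlen n k = mlen s k" unfolding mlen_def sp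
    by (subst sum.union_disjoint) (auto simp: z)
  show mp: "mpow n lam k = mpow s lam k" unfolding mpow_def sp
    by (subst prod.union_disjoint) (auto simp: z)
  show "mpow n lam k \<noteq> lam j"
  proof
    assume e: "mpow n lam k = lam j"
    have l2: "2 \<le> mlen n k" using ml assms(5) by simp
    show False
    proof (cases "j \<le> s")
      case True
      have "\<exists>h\<in>{1..s}. mpow n lam k = lam h" using True e assms(6) by auto
      then have "k \<in> K1 n s lam" using assms(3) kn l2
        unfolding only_level_s_resonances_def by blast
      then show False using assms(5) unfolding K1_def mlen_def by auto
    next
      case False
      have "\<exists>h\<in>{s+1..n}. mpow n lam k = lam h" using False e assms(6) by auto
      then have "k \<in> K2 n s lam" using assms(3) kn l2
        unfolding only_level_s_resonances_def by blast
      then have "mlen s k = 0" unfolding K2_def mlen_def by auto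
      then show False using assms(5) by simp
    qed
  qed
qed


abbreviation "OSset n s lam m \<equiv> {cmod (mpow s lam k - lam j) | k j.
      k \<in> multi_idx s \<and> 2 \<le> mlen s k \<and> mlen s k \<le> m \<and> j \<in> {1..n}}"
abbreviation "OTset n lam m \<equiv> {cmod (mpow n lam k - lam j) | k j.
      k \<in> multi_idx n \<and> 2 \<le> mlen n k \<and> mlen n k \<le> m \<and> j \<in> {1..n}
      \<and> mpow n lam k \<noteq> lam j}"

lemma sub_set:
  assumes "1 \<le> s" "s \<le> n" "only_level_s_resonances n s lam"
  shows "OSset n s lam m \<subseteq> OTset n lam m"
proof
  fix x assume "x \<in> OSset n s lam m"
  then obtain k j where x: "x = cmod (mpow s lam k - lam j)" "k \<in> multi_idx s"
    "2 \<le> mlen s k" "mlen s k \<le> m" "j \<in> {1..n}" by blast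
  note N = nores[OF assms x(2,3,5)]
  show "x \<in> OTset n lam m"
    using N x by (intro CollectI exI[of _ k] exI[of _ j]) auto
qed

lemma ne_set:
  assumes "1 \<le> s" "2 \<le> m" "1 \<le> n"
  shows "OSset n s lam m \<noteq> {}"
proof -
  define k0 where "k0 = (\<lambda>i::nat. if i = 1 then 2 else (0::nat))"
  have a: "k0 \<in> multi_idx s" using assms unfolding k0_def multi_idx_def by auto
  have b: "mlen s k0 = 2" using assms unfolding k0_def mlen_def
    by (simp add: sum.delta)
  have "cmod (mpow s lam k0 - lam 1) \<in> OSset n s lam m"
    using a b assms by (intro CollectI exI[of _ k0] exI[of _ 1]) auto
  then show ?thesis by blast
qed

lemma OT_pos: "x \<in> OTset n lam m \<Longrightarrow> 0 < x" by auto

lemma os_sub: "m \<le> m' \<Longrightarrow> OSset n s lam m \<subseteq> OSset n s lam m'"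
proof
  fix x assume m: "m \<le> m'" and "x \<in> OSset n s lam m"
  then obtain k j where x: "x = cmod (mpow s lam k - lam j)" "k \<in> multi_idx s"
    "2 \<le> mlen s k" "mlen s k \<le> m" "j \<in> {1..n}" by blast
  have "mlen s k \<le> m'" using x(4) m by linarith
  then show "x \<in> OSset n s lam m'" using x by blast
qed

lemma ot_sub: "m \<le> m' \<Longrightarrow> OTset n lam m \<subseteq> OTset n lam m'"
proof
  fix x assume m: "m \<le> m'" and "x \<in> OTset n lam m"
  then obtain k j where x: "x = cmod (mpow n lam k - lam j)" "k \<in> multi_idx n"
    "2 \<le> mlen n k" "mlen n k \<le> m" "j \<in> {1..n}" "mpow n lam k \<noteq> lam j" by blast
  have "mlen n k \<le> m'" using x(4) m by linarith
  then show "x \<in> OTset n lam m'" using x by blast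
qed

context
  fixes n s lam
  assumes A: "1 \<le> s" "s \<le> n" "only_level_s_resonances n s lam"
begin

lemma ot_pos: "2 \<le> m \<Longrightarrow> 0 < omega_tilde n lam m"
proof -
  assume m: "2 \<le> m"
  have ne: "OTset n lam m \<noteq> {}"
  proof -
    have "OSset n s lam m \<noteq> {}" using ne_set[of s m n lam] A m by auto
    then show ?thesis using sub_set[OF A, of m] by blast
  qed
  have "omega_tilde n lam m \<in> OTset n lam m" unfolding omega_tilde_def
    by (rule Min_in[OF fin_ot ne])
  then show ?thesis by (rule OT_pos)
qed

lemma ot_le_os: "2 \<le> m \<Longrightarrow> omega_tilde n lam m \<le> omega_s n s lam m"
  unfolding omega_tilde_def omega_s_def
  by (rule Min_antimono[OF sub_set[OF A] ne_set fin_ot]) (use A in auto)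

lemma os_pos: "2 \<le> m \<Longrightarrow> 0 < omega_s n s lam m"
  using ot_pos ot_le_os by fastforce

lemma os_mono: "2 \<le> m \<Longrightarrow> m \<le> m' \<Longrightarrow> omega_s n s lam m' \<le> omega_s n s lam m"
  unfolding omega_s_def
  by (rule Min_antimono[OF os_sub ne_set fin_os]) (use A in auto)

lemma ot_mono: "2 \<le> m \<Longrightarrow> m \<le> m' \<Longrightarrow> omega_tilde n lam m' \<le> omega_tilde n lam m"
proof -
  assume m: "2 \<le> m" "m \<le> m'"
  have ne: "OTset n lam m \<noteq> {}"
  proof -
    have "OSset n s lam m \<noteq> {}" using ne_set[of s m n lam] A m by auto
    then show ?thesis using sub_set[OF A, of m] by blast
  qed
  show ?thesis unfolding omega_tilde_def
    by (rule Min_antimono[OF ot_sub ne fin_ot]) (use m in auto)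
qed

end

lemma core:
  fixes x y a D P :: real
  assumes "0 < y" "y < 1" "y powr a \<le> x" "x \<le> 1" "1 \<le> a" "0 < D" "P \<le> 2*D" "0 < P"
  shows "norm (ln (1/x) / D) \<le> 2*a*(ln (1/y) / P)"
proof -
  have yp: "0 < y powr a" using assms by simp
  have x0: "0 < x" using yp assms by linarith
  have l1: "ln (1/x) = - ln x" using x0 by (simp add: ln_div)
  have l2: "ln (1/y) = - ln y" using assms by (simp add: ln_div)
  have lx: "ln x \<le> 0" using x0 assms by simp
  have ly: "ln y < 0" using assms by simp
  have "a * ln y = ln (y powr a)" using assms by (simp add: ln_powr)
  also have "\<dots> \<le> ln x" using ln_le_cancel_iff[OF yp x0] assms(3) by blast
  finally have h: "- ln x \<le> a * (- ln y)" by simp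
  have n: "norm (ln (1/x) / D) = (- ln x) / D" using lx assms l1 by simp
  have "(- ln x) / D \<le> a * (- ln y) / D" using h assms by (simp add: divide_right_mono)
  also have "\<dots> \<le> a * (- ln y) / (P/2)"
  proof (rule divide_left_mono)
    show "0 \<le> a * (- ln y)" using assms ly by (intro mult_nonneg_nonneg) auto
    show "P/2 \<le> D" using assms by simp
    show "0 < D * (P/2)" using assms by simp
  qed
  also have "\<dots> = 2*a*(ln (1/y) / P)" using l2 by simp
  finally show ?thesis using n by simp
qed

theorem lemma2p2:
  fixes n s :: nat and lam :: "nat \<Rightarrow> complex" and p :: "nat \<Rightarrow> nat"
    and k :: nat and \<alpha> :: real
  assumes "n \<ge> 2"
    and "\<forall>i\<in>{1..n}. lam i \<noteq> 0"
    and "1 \<le> s" and "s \<le> n"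
    and "only_level_s_resonances n s lam"
    and "partial_brjuno n s lam p"
    and "\<alpha> \<ge> 1"
    and "\<forall>\<nu>. p \<nu> > k \<and> p \<nu> - k \<ge> 2 \<longrightarrow>
           omega_tilde n lam (p \<nu> - k) \<ge> omega_s n s lam (p \<nu>) powr \<alpha>"
  shows "reduced_brjuno n lam"
proof -
  note A = assms(3,4,5)
  have sm: "strict_mono p" and p0: "p 0 = 1"
    and sb: "summable (\<lambda>\<nu>. ln (1 / omega_s n s lam (p (Suc \<nu>))) / real (p \<nu>))"
    using assms(6) unfolding partial_brjuno_def by auto
  have pge: "\<And>\<nu>. \<nu> \<le> p \<nu>" using sm by (rule seq_suble)
  have pmono: "\<And>a b. a \<le> b \<Longrightarrow> p a \<le> p b" using sm by (simp add: strict_mono_less_eq)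
  show ?thesis
  proof (cases "\<exists>m0\<ge>2. omega_s n s lam m0 < 1")
    case False
    then have h: "\<And>m. 2 \<le> m \<Longrightarrow> 1 \<le> omega_s n s lam m" by force
    have ot1: "1 \<le> omega_tilde n lam m" if m: "2 \<le> m" for m
    proof -
      define v where "v = m + k + 2"
      have pv: "m + k + 2 \<le> p v" using pge[of v] unfolding v_def by simp
      have "1 \<le> omega_s n s lam (p v) powr \<alpha>"
        using h[of "p v"] pv assms(7) by (intro ge_one_powr_ge_zero) auto
      also have "\<dots> \<le> omega_tilde n lam (p v - k)" using assms(8) pv by auto
      also have "\<dots> \<le> omega_tilde n lam m" using ot_mono[OF A, of m "p v - k"] m pv by auto
      finally show ?thesis .
    qed
    define c where "c = omega_tilde n lam 2"
    have c1: "1 \<le> c" using ot1[of 2] c_def by simp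
    define q where "q = (\<lambda>\<nu>::nat. (2::nat) ^ \<nu>)"
    have "strict_mono q" unfolding q_def strict_mono_def by (simp add: power_strict_increasing)
    moreover have "q 0 = 1" unfolding q_def by simp
    moreover have "summable (\<lambda>\<nu>. ln (1 / omega_tilde n lam (q (Suc \<nu>))) / real (q \<nu>))"
    proof (rule summable_comparison_test)
      show "summable (\<lambda>\<nu>. ln c * (1/2) ^ \<nu>)"
        by (intro summable_mult summable_geometric) simp
      show "\<exists>N. \<forall>\<nu>\<ge>N. norm (ln (1 / omega_tilde n lam (q (Suc \<nu>))) / real (q \<nu>))
               \<le> ln c * (1/2) ^ \<nu>"
      proof (intro exI allI impI)
        fix \<nu> :: nat
        define x where "x = omega_tilde n lam (q (Suc \<nu>))"
        have q2: "2 \<le> q (Suc \<nu>)" unfolding q_def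
          using one_le_power[of "2::nat" \<nu>] by simp
        have x1: "1 \<le> x" using ot1[OF q2] x_def by simp
        have xc: "x \<le> c" using ot_mono[OF A, of 2 "q (Suc \<nu>)"] q2 x_def c_def by simp
        have l: "ln (1/x) = - ln x" using x1 by (simp add: ln_div)
        have lx: "0 \<le> ln x" using x1 by simp
        have lxc: "ln x \<le> ln c" using x1 xc by simp
        have "norm (ln (1 / x) / real (q \<nu>)) = ln x / 2 ^ \<nu>"
          using l lx unfolding q_def by simp
        also have "\<dots> \<le> ln c / 2 ^ \<nu>" using lxc by (simp add: divide_right_mono)
        also have "\<dots> = ln c * (1/2) ^ \<nu>" by (simp add: power_one_over field_simps)
        finally show "norm (ln (1 / omega_tilde n lam (q (Suc \<nu>))) / real (q \<nu>))
               \<le> ln c * (1/2) ^ \<nu>" using x_def by simp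
      qed
    qed
    ultimately show ?thesis unfolding reduced_brjuno_def by blast
  next
    case True
    then obtain m0 where m0: "2 \<le> m0" "omega_s n s lam m0 < 1" by blast
    define N where "N = 2*k + m0 + 2"
    have pN: "\<And>\<mu>. N \<le> \<mu> \<Longrightarrow> 2*k + m0 + 2 \<le> p \<mu>"
      using pge pmono unfolding N_def by (meson order_trans)
    define q where "q = (\<lambda>\<nu>. if \<nu> = 0 then 1 else p (\<nu> + N) - k)"
    have "strict_mono q"
      unfolding strict_mono_Suc_iff
    proof
      fix \<nu>
      show "q \<nu> < q (Suc \<nu>)"
      proof (cases "\<nu> = 0")
        case True
        then show ?thesis using pN[of "Suc N"] unfolding q_def by auto
      next
        case False
        have "p (\<nu> + N) < p (Suc \<nu> + N)" using sm by (simp add: strict_mono_less)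
        moreover have "k < p (\<nu> + N)" using pN[of "\<nu> + N"] by simp
        ultimately show ?thesis using False unfolding q_def by simp
      qed
    qed
    moreover have "q 0 = 1" unfolding q_def by simp
    moreover have "summable (\<lambda>\<nu>. ln (1 / omega_tilde n lam (q (Suc \<nu>))) / real (q \<nu>))"
    proof (subst summable_Suc_iff[symmetric], rule summable_comparison_test)
      define b where "b = (\<lambda>\<nu>. ln (1 / omega_s n s lam (p (Suc \<nu>))) / real (p \<nu>))"
      have "summable (\<lambda>\<nu>. b (\<nu> + (N+1)))" using sb unfolding b_def
        by (subst summable_iff_shift) simp
      then show "summable (\<lambda>\<nu>. 2*\<alpha>*b (\<nu> + (N+1)))" by (rule summable_mult)
      show "\<exists>M. \<forall>\<nu>\<ge>M. norm (ln (1 / omega_tilde n lam (q (Suc (Suc \<nu>)))) / real (q (Suc \<nu>)))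
               \<le> 2*\<alpha>*b (\<nu> + (N+1))"
      proof (intro exI allI impI)
        fix \<nu> :: nat
        define P where "P = p (\<nu> + (N+1))"
        define P' where "P' = p (Suc (\<nu> + (N+1)))"
        have qe1: "q (Suc \<nu>) = P - k" unfolding q_def P_def by simp
        have qe2: "q (Suc (Suc \<nu>)) = P' - k" unfolding q_def P'_def by simp
        have bP: "b (\<nu> + (N+1)) = ln (1 / omega_s n s lam P') / real P"
          unfolding b_def P_def P'_def by simp
        have PN: "2*k + m0 + 2 \<le> P" using pN[of "\<nu> + (N+1)"] P_def by simp
        have P'N: "2*k + m0 + 2 \<le> P'" using pN[of "Suc (\<nu> + (N+1))"] P'_def by simp
        define y where "y = omega_s n s lam P'"
        define x where "x = omega_tilde n lam (P' - k)"
        have y0: "0 < y" using os_pos[OF A, of P'] P'N y_def by simp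
        have y1: "y < 1" using os_mono[OF A, of m0 P'] P'N m0 y_def by simp
        have yx: "y powr \<alpha> \<le> x" using assms(8) P'N unfolding x_def y_def P'_def by auto
        have "x \<le> omega_s n s lam (P' - k)" using ot_le_os[OF A, of "P' - k"] P'N x_def by simp
        also have "\<dots> \<le> omega_s n s lam m0" using os_mono[OF A, of m0 "P' - k"] P'N m0 by simp
        finally have x1: "x \<le> 1" using m0 by simp
        have D: "0 < real (P - k)" "real P \<le> 2 * real (P - k)" "0 < real P" using PN by auto
        have "norm (ln (1/x) / real (P - k)) \<le> 2*\<alpha>*(ln (1/y) / real P)"
          by (rule core[OF y0 y1 yx x1 assms(7) D])
        then show "norm (ln (1 / omega_tilde n lam (q (Suc (Suc \<nu>)))) / real (q (Suc \<nu>)))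
               \<le> 2*\<alpha>*b (\<nu> + (N+1))"
          using qe1 qe2 bP x_def y_def by simp
      qed
    qed
    ultimately show ?thesis unfolding reduced_brjuno_def by blast
  qed
qed

end
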